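(* Let $P_1$ be the uniform distribution on $[0,\frac12]$, let $P_2$ be the uniform distribution on $[\frac34,1]$, and let $P=\frac34P_1+\frac14P_2$. For $n\ge 2$, let $\alpha_n$ be an optimal set of $n$-means for $P$. Then $\alpha_n$ does not contain any point from the open interval $(\frac12,\frac34)$.
   Context: For a finite set $\alpha\subset\mathbb R$, $V(P;\alpha)=\int\min_{a\in\alpha}(x-a)^2\,dP(x)$; $V_n=\inf\{V(P;\alpha):\mathrm{card}(\alpha)\le n\}$; an optimal set of $n$-means is a set $\alpha$ with $\mathrm{card}(\alpha)\le n$ and $V(P;\alpha)=V_n$. *)

theory Defs
  imports "HOL-Probability.Probability"
begin

definition unif_dens :: "real \<Rightarrow> real \<Rightarrow> real \<Rightarrow> real" where
  "unif_dens a b x = indicator {a..b} x / (b - a)"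

definition P :: "real measure" where
  "P = density lborel (\<lambda>x. ennreal (3/4 * unif_dens 0 (1/2) x + 1/4 * unif_dens (3/4) 1 x))"

definition distortion :: "real measure \<Rightarrow> real set \<Rightarrow> real" where
  "distortion M \<alpha> = (\<integral>x. Min ((\<lambda>a. (x - a)\<^sup>2) ` \<alpha>) \<partial>M)"

definition nth_quant_error :: "real measure \<Rightarrow> nat \<Rightarrow> real" where
  "nth_quant_error M n =
     Inf {distortion M \<beta> | \<beta>. finite \<beta> \<and> \<beta> \<noteq> {} \<and> card \<beta> \<le> n}"

definition optimal_n_means :: "real measure \<Rightarrow> nat \<Rightarrow> real set \<Rightarrow> bool" where
  "optimal_n_means M n \<alpha> \<longleftrightarrow> finite \<alpha> \<and> \<alpha> \<noteq> {} \<and> card \<alpha> \<le> n \<and>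
     distortion M \<alpha> = nth_quant_error M n"

end

theory Submission
  imports Defs
begin

definition dd :: "real set \<Rightarrow> real \<Rightarrow> real" where
  "dd \<beta> x = Min ((\<lambda>a. \<bar>x - a\<bar>) ` \<beta>)"

lemma dd_meas[measurable]: "finite \<beta> \<Longrightarrow> dd \<beta> \<in> borel_measurable borel"
  unfolding dd_def by (rule borel_measurable_Min) auto

lemma dd_nonneg: "finite \<beta> \<Longrightarrow> \<beta> \<noteq> {} \<Longrightarrow> 0 \<le> dd \<beta> x"
  unfolding dd_def by (auto simp: Min_ge_iff)

lemma dd_le_iff: "finite \<beta> \<Longrightarrow> \<beta> \<noteq> {} \<Longrightarrow> dd \<beta> x \<le> t \<longleftrightarrow> (\<exists>a\<in>\<beta>. \<bar>x - a\<bar> \<le> t)"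
  unfolding dd_def by (auto simp: Min_le_iff)

lemma qd_eq:
  assumes "finite \<beta>" "\<beta> \<noteq> {}"
  shows "Min ((\<lambda>a. (x - a)\<^sup>2) ` \<beta>) = (dd \<beta> x)\<^sup>2"
proof -
  have "dd \<beta> x \<in> (\<lambda>a. \<bar>x - a\<bar>) ` \<beta>"
    unfolding dd_def using assms by (intro Min_in) auto
  then obtain a where a: "a \<in> \<beta>" "dd \<beta> x = \<bar>x - a\<bar>" by auto
  have le: "\<bar>x - a\<bar> \<le> \<bar>x - b\<bar>" if "b \<in> \<beta>" for b
    using a that assms unfolding dd_def by (metis (no_types, lifting) Min_le finite_imageI image_eqI)
  show ?thesis
  proof (rule Min_eqI)
    show "finite ((\<lambda>a. (x - a)\<^sup>2) ` \<beta>)" using assms by auto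
    show "y \<in> (\<lambda>a. (x - a)\<^sup>2) ` \<beta> \<Longrightarrow> (dd \<beta> x)\<^sup>2 \<le> y" for y
      using le a by (auto simp: abs_le_square_iff simp del: power2_abs)
    show "(dd \<beta> x)\<^sup>2 \<in> (\<lambda>a. (x - a)\<^sup>2) ` \<beta>" using a by (simp add: image_iff) (metis power2_abs)
  qed
qed

lemma sq_integral:
  assumes "0 \<le> d"
  shows "(\<integral>\<^sup>+t. indicator {0..d} t * ennreal (2*t) \<partial>lborel) = ennreal (d\<^sup>2)"
proof -
  have "((\<lambda>t. 2*t) has_integral (d\<^sup>2 - 0\<^sup>2)) {0..d}"
    by (rule fundamental_theorem_of_calculus[OF assms])
       (auto intro!: derivative_eq_intros simp: has_real_derivative_iff_has_vector_derivative[symmetric])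
  then have "(\<integral>\<^sup>+t. ennreal (indicator {0..d} t * (2*t)) \<partial>lborel) = ennreal (d\<^sup>2)"
    by (intro nn_integral_has_integral_lebesgue) auto
  moreover have "(\<integral>\<^sup>+t. indicator {0..d} t * ennreal (2*t) \<partial>lborel) = (\<integral>\<^sup>+t. ennreal (indicator {0..d} t * (2*t)) \<partial>lborel)"
    by (intro nn_integral_cong) (auto simp: indicator_def)
  ultimately show ?thesis by simp
qed

lemma layer_lb:
  fixes \<beta> :: "real set" and p q :: real and \<phi> :: "real \<Rightarrow> real"
  assumes fin: "finite \<beta>" "\<beta> \<noteq> {}"
    and \<phi>: "\<And>t. 0 \<le> t \<Longrightarrow> \<phi> t \<le> measure lborel {x\<in>{p..q}. t < dd \<beta> x}"
  shows "(\<integral>\<^sup>+t. indicator {0..} t * ennreal (2*t*\<phi> t) \<partial>lborel)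
      \<le> (\<integral>\<^sup>+x. indicator {p..q} x * ennreal ((dd \<beta> x)\<^sup>2) \<partial>lborel)"
proof -
  note [measurable] = dd_meas[OF fin(1)]
  have "(\<integral>\<^sup>+x. indicator {p..q} x * ennreal ((dd \<beta> x)\<^sup>2) \<partial>lborel)
      = (\<integral>\<^sup>+x. (\<integral>\<^sup>+t. indicator {p..q} x * (indicator {0..dd \<beta> x} t * ennreal (2*t)) \<partial>lborel) \<partial>lborel)"
    by (intro nn_integral_cong, subst nn_integral_cmult)
       (auto simp: sq_integral dd_nonneg[OF fin])
  also have "\<dots> = (\<integral>\<^sup>+t. (\<integral>\<^sup>+x. indicator {p..q} x * (indicator {0..dd \<beta> x} t * ennreal (2*t)) \<partial>lborel) \<partial>lborel)"
    by (rule lborel_pair.Fubini'[symmetric]) (auto simp: case_prod_unfold indicator_def)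
  also have "\<dots> = (\<integral>\<^sup>+t. ennreal (2*t) * indicator {0..} t * emeasure lborel {x\<in>{p..q}. t \<le> dd \<beta> x} \<partial>lborel)"
  proof (intro nn_integral_cong)
    fix t :: real
    have "(\<integral>\<^sup>+x. indicator {p..q} x * (indicator {0..dd \<beta> x} t * ennreal (2*t)) \<partial>lborel)
       = (\<integral>\<^sup>+x. (ennreal (2*t) * indicator {0..} t) * indicator {x\<in>{p..q}. t \<le> dd \<beta> x} x \<partial>lborel)"
      by (intro nn_integral_cong) (auto simp: indicator_def)
    also have "\<dots> = ennreal (2*t) * indicator {0..} t * emeasure lborel {x\<in>{p..q}. t \<le> dd \<beta> x}"
      by (subst nn_integral_cmult_indicator) auto
    finally show "(\<integral>\<^sup>+x. indicator {p..q} x * (indicator {0..dd \<beta> x} t * ennreal (2*t)) \<partial>lborel)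
       = ennreal (2*t) * indicator {0..} t * emeasure lborel {x\<in>{p..q}. t \<le> dd \<beta> x}" .
  qed
  also have "\<dots> \<ge> (\<integral>\<^sup>+t. indicator {0..} t * ennreal (2*t*\<phi> t) \<partial>lborel)"
  proof (intro nn_integral_mono)
    fix t :: real
    show "indicator {0..} t * ennreal (2*t*\<phi> t) \<le> ennreal (2*t) * indicator {0..} t * emeasure lborel {x\<in>{p..q}. t \<le> dd \<beta> x}"
    proof (cases "0 \<le> t \<and> 0 \<le> \<phi> t")
      case True
      have fm: "emeasure lborel {x\<in>{p..q}. t < dd \<beta> x} \<noteq> \<infinity>"
        using emeasure_bounded_finite[OF bounded_subset[OF bounded_closed_interval[of p q]], of "{x\<in>{p..q}. t < dd \<beta> x}"] by (auto simp: subset_iff)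
      have "ennreal (\<phi> t) \<le> ennreal (measure lborel {x\<in>{p..q}. t < dd \<beta> x})"
        using \<phi> True by auto
      also have "\<dots> = emeasure lborel {x\<in>{p..q}. t < dd \<beta> x}"
        using fm by (simp add: emeasure_eq_ennreal_measure)
      also have "\<dots> \<le> emeasure lborel {x\<in>{p..q}. t \<le> dd \<beta> x}"
        by (intro emeasure_mono) auto
      finally have "ennreal (\<phi> t) \<le> emeasure lborel {x\<in>{p..q}. t \<le> dd \<beta> x}" .
      then show ?thesis using True
        by (auto simp: ennreal_mult' mult.commute intro!: mult_left_mono) (metis mult.commute mult_left_mono zero_le)
    next
      case False
      then show ?thesis
        by (auto simp: indicator_def ennreal_neg mult_nonneg_nonpos)
    qed
  qed
  finally show ?thesis .
qed

lemma meas_ub: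
  fixes \<beta> :: "real set"
  assumes fin: "finite \<beta>" "\<beta> \<noteq> {}" and pq: "p \<le> q" and t: "0 \<le> t" and dl: "0 \<le> dl" and dh: "0 \<le> dh"
    and lo: "\<And>b. b \<in> \<beta> \<Longrightarrow> b < p \<Longrightarrow> b \<le> p - dl"
    and hi: "\<And>b. b \<in> \<beta> \<Longrightarrow> q < b \<Longrightarrow> q + dh \<le> b"
  shows "measure lborel {x\<in>{p..q}. dd \<beta> x \<le> t} \<le> 2 * real (card (\<beta> \<inter> {p..q})) * t
     + (if \<exists>b\<in>\<beta>. b < p then max 0 (t - dl) else 0) + (if \<exists>b\<in>\<beta>. q < b then max 0 (t - dh) else 0)"
proof -
  define Lo where "Lo = (if \<exists>b\<in>\<beta>. b < p then {p..p + max 0 (t - dl)} else {})"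
  define Hi where "Hi = (if \<exists>b\<in>\<beta>. q < b then {q - max 0 (t - dh)..q} else {})"
  define C where "C = (\<Union>b\<in>\<beta> \<inter> {p..q}. {b - t..b + t})"
  have sub: "{x\<in>{p..q}. dd \<beta> x \<le> t} \<subseteq> C \<union> Lo \<union> Hi"
  proof
    fix x assume x: "x \<in> {x\<in>{p..q}. dd \<beta> x \<le> t}"
    then obtain b where b: "b \<in> \<beta>" "\<bar>x - b\<bar> \<le> t" using dd_le_iff[OF fin] by auto
    show "x \<in> C \<union> Lo \<union> Hi"
    proof (cases "b < p")
      case True
      then have "x \<in> Lo" using lo[OF b(1) True] b x unfolding Lo_def by auto
      then show ?thesis by auto
    next
      case False
      show ?thesis
      proof (cases "q < b")
        case True
        then have "x \<in> Hi" using hi[OF b(1) True] b x unfolding Hi_def by auto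
        then show ?thesis by auto
      next
        case False2: False
        then have "b \<in> \<beta> \<inter> {p..q}" using False b by auto
        then have "x \<in> C" using b x unfolding C_def by (simp add: abs_le_iff) (rule bexI[of _ b], auto)
        then show ?thesis by auto
      qed
    qed
  qed
  have Cm: "C \<in> sets lborel" unfolding C_def using fin by (intro sets.finite_UN) auto
  have Lm: "Lo \<in> sets lborel" "Hi \<in> sets lborel" unfolding Lo_def Hi_def by auto
  have "emeasure lborel {x\<in>{p..q}. dd \<beta> x \<le> t} \<le> emeasure lborel (C \<union> Lo \<union> Hi)"
    by (rule emeasure_mono[OF sub]) (use Cm Lm in auto)
  also have "\<dots> \<le> emeasure lborel C + emeasure lborel Lo + emeasure lborel Hi"
    by (rule order_trans[OF emeasure_subadditive add_right_mono[OF emeasure_subadditive]])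
       (use Cm Lm in auto)
  also have "emeasure lborel C \<le> (\<Sum>b\<in>\<beta> \<inter> {p..q}. emeasure lborel {b - t..b + t})"
    unfolding C_def using fin by (intro emeasure_subadditive_finite) auto
  also have "\<dots> = (\<Sum>b\<in>\<beta> \<inter> {p..q}. ennreal (2 * t))"
    using t by (intro sum.cong) auto
  also have "\<dots> = ennreal (2 * real (card (\<beta> \<inter> {p..q})) * t)"
    using t by (simp add: ennreal_of_nat_eq_real_of_nat ennreal_mult'[symmetric] mult.commute mult.left_commute)
  also have "emeasure lborel Lo = ennreal (if \<exists>b\<in>\<beta>. b < p then max 0 (t - dl) else 0)"
    unfolding Lo_def by auto
  also have "emeasure lborel Hi = ennreal (if \<exists>b\<in>\<beta>. q < b then max 0 (t - dh) else 0)"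
    unfolding Hi_def by auto
  finally have "emeasure lborel {x\<in>{p..q}. dd \<beta> x \<le> t} \<le> ennreal (2 * real (card (\<beta> \<inter> {p..q})) * t
     + (if \<exists>b\<in>\<beta>. b < p then max 0 (t - dl) else 0) + (if \<exists>b\<in>\<beta>. q < b then max 0 (t - dh) else 0))"
    using t by (simp add: ennreal_plus[symmetric] del: ennreal_plus)
  then show ?thesis unfolding measure_def
    using t by (intro enn2real_leI) auto
qed

lemma meas_lb:
  fixes \<beta> :: "real set"
  assumes fin: "finite \<beta>" "\<beta> \<noteq> {}" and pq: "p \<le> q" and t: "0 \<le> t" and dl: "0 \<le> dl" and dh: "0 \<le> dh"
    and lo: "\<And>b. b \<in> \<beta> \<Longrightarrow> b < p \<Longrightarrow> b \<le> p - dl"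
    and hi: "\<And>b. b \<in> \<beta> \<Longrightarrow> q < b \<Longrightarrow> q + dh \<le> b"
  shows "(q - p) - (2 * real (card (\<beta> \<inter> {p..q})) * t
     + (if \<exists>b\<in>\<beta>. b < p then max 0 (t - dl) else 0) + (if \<exists>b\<in>\<beta>. q < b then max 0 (t - dh) else 0))
     \<le> measure lborel {x\<in>{p..q}. t < dd \<beta> x}"
proof -
  note [measurable] = dd_meas[OF fin(1)]
  have eq: "{x\<in>{p..q}. t < dd \<beta> x} = {p..q} - {x\<in>{p..q}. dd \<beta> x \<le> t}" by auto
  have "measure lborel {x\<in>{p..q}. t < dd \<beta> x} = (q - p) - measure lborel {x\<in>{p..q}. dd \<beta> x \<le> t}"
    unfolding eq using pq by (subst measure_Diff) auto
  then show ?thesis using meas_ub[OF assms] by linarith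
qed

lemma T1_integral:
  fixes L e :: real
  assumes L: "0 \<le> L" and e: "0 < e"
  shows "(\<integral>\<^sup>+t. indicator {0..} t * ennreal (2*t*(L - e*t)) \<partial>lborel) = ennreal (L^3 / (3*e^2))"
proof -
  have "((\<lambda>t. 2*t*(L - e*t)) has_integral ((L*(L/e)^2 - 2*e*(L/e)^3/3) - (L*0^2 - 2*e*0^3/3))) {0..L/e}"
    by (rule fundamental_theorem_of_calculus) (use L e in \<open>auto intro!: derivative_eq_intros
        simp: has_real_derivative_iff_has_vector_derivative[symmetric] algebra_simps power2_eq_square power3_eq_cube\<close>)
  moreover have "(L*(L/e)^2 - 2*e*(L/e)^3/3) - (L*0^2 - 2*e*0^3/3) = L^3 / (3*e^2)"
    using e by (simp add: field_simps power2_eq_square power3_eq_cube)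
  ultimately have h: "((\<lambda>t. 2*t*(L - e*t)) has_integral (L^3 / (3*e^2))) {0..L/e}" by simp
  have "(\<integral>\<^sup>+t. ennreal (indicator {0..L/e} t * (2*t*(L - e*t))) \<partial>lborel) = ennreal (L^3 / (3*e^2))"
  proof (rule nn_integral_has_integral_lebesgue[OF _ h])
    fix t assume "t \<in> {0..L/e}"
    then have "e * t \<le> L" using e by (auto simp: field_simps)
    then show "0 \<le> 2*t*(L - e*t)" using \<open>t \<in> _\<close> by auto
  qed
  moreover have "(\<integral>\<^sup>+t. indicator {0..} t * ennreal (2*t*(L - e*t)) \<partial>lborel)
      = (\<integral>\<^sup>+t. ennreal (indicator {0..L/e} t * (2*t*(L - e*t))) \<partial>lborel)"
  proof (intro nn_integral_cong)
    fix t :: real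
    show "indicator {0..} t * ennreal (2*t*(L - e*t)) = ennreal (indicator {0..L/e} t * (2*t*(L - e*t)))"
    proof (cases "0 \<le> t \<and> t \<le> L/e")
      case True then show ?thesis by (auto simp: indicator_def)
    next
      case False
      show ?thesis
      proof (cases "0 \<le> t")
        case True
        with False have "L < e * t" using e by (auto simp: field_simps)
        then have "2*t*(L - e*t) \<le> 0" using True by (intro mult_nonneg_nonpos) auto
        then show ?thesis using False True by (auto simp: indicator_def ennreal_neg)
      next
        case False then show ?thesis by (auto simp: indicator_def)
      qed
    qed
  qed
  ultimately show ?thesis by simp
qed

lemma LB_T1:
  fixes \<beta> :: "real set"
  assumes fin: "finite \<beta>" "\<beta> \<noteq> {}" and pq: "p \<le> q" and e: "0 < e"
    and m: "\<And>t. 0 \<le> t \<Longrightarrow> (q - p) - e * t \<le> measure lborel {x\<in>{p..q}. t < dd \<beta> x}"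
  shows "ennreal ((q - p)^3 / (3*e^2)) \<le> (\<integral>\<^sup>+x. indicator {p..q} x * ennreal ((dd \<beta> x)\<^sup>2) \<partial>lborel)"
  using layer_lb[OF fin, of "\<lambda>t. (q - p) - e * t" p q] m T1_integral[of "q - p" e] pq e by simp

lemma T2_integral:
  "(\<integral>\<^sup>+t. indicator {0..} t * ennreal (2*t*min (1/2 - 2*t) (5/8 - 3*t)) \<partial>lborel) = ennreal (29/3456)"
proof -
  let ?f = "\<lambda>t::real. 2*t*min (1/2 - 2*t) (5/8 - 3*t)"
  have h1: "(?f has_integral ((((1/8)::real)^2/2 - 4*(1/8)^3/3) - (0^2/2 - 4*0^3/3))) {0..1/8}"
    by (rule fundamental_theorem_of_calculus) (auto intro!: derivative_eq_intros
        simp: has_real_derivative_iff_has_vector_derivative[symmetric] algebra_simps power2_eq_square power3_eq_cube min_def)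
  have h2: "(?f has_integral ((5/8*((5/24)::real)^2 - 2*(5/24)^3) - (5/8*(1/8)^2 - 2*(1/8)^3))) {1/8..5/24}"
    by (rule fundamental_theorem_of_calculus) (auto intro!: derivative_eq_intros
        simp: has_real_derivative_iff_has_vector_derivative[symmetric] algebra_simps power2_eq_square power3_eq_cube min_def)
  have h: "(?f has_integral (29/3456)) {0..5/24}"
    using has_integral_combine[OF _ _ h1 h2] by (simp add: power2_eq_square power3_eq_cube)
  have "(\<integral>\<^sup>+t. ennreal (indicator {0..5/24} t * ?f t) \<partial>lborel) = ennreal (29/3456)"
  proof (rule nn_integral_has_integral_lebesgue[OF _ h])
    fix t :: real assume "t \<in> {0..5/24}"
    then show "0 \<le> ?f t" by (auto simp: min_def)
  qed
  moreover have "(\<integral>\<^sup>+t. indicator {0..} t * ennreal (?f t) \<partial>lborel)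
      = (\<integral>\<^sup>+t. ennreal (indicator {0..5/24} t * ?f t) \<partial>lborel)"
  proof (intro nn_integral_cong)
    fix t :: real
    show "indicator {0..} t * ennreal (?f t) = ennreal (indicator {0..5/24} t * ?f t)"
    proof (cases "0 \<le> t \<and> t \<le> 5/24")
      case True then show ?thesis by (auto simp: indicator_def)
    next
      case False
      show ?thesis
      proof (cases "0 \<le> t")
        case True
        with False have "?f t \<le> 0" by (intro mult_nonneg_nonpos) (auto simp: min_def)
        then show ?thesis using False True by (auto simp: indicator_def ennreal_neg)
      next
        case False then show ?thesis by (auto simp: indicator_def)
      qed
    qed
  qed
  ultimately show ?thesis by simp
qed

lemma cell_integral:
  fixes c w :: real
  assumes "0 \<le> w"
  shows "(\<integral>\<^sup>+x. indicator {c - w/2..c + w/2} x * ennreal ((x - c)\<^sup>2) \<partial>lborel) = ennreal (w^3/12)"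
proof -
  have "((\<lambda>x. (x - c)\<^sup>2) has_integral (((c + w/2) - c)^3/3 - ((c - w/2) - c)^3/3)) {c - w/2..c + w/2}"
    by (rule fundamental_theorem_of_calculus) (use assms in \<open>auto intro!: derivative_eq_intros
        simp: has_real_derivative_iff_has_vector_derivative[symmetric] field_simps power2_eq_square power3_eq_cube\<close>)
  moreover have "((c + w/2) - c)^3/3 - ((c - w/2) - c)^3/3 = w^3/12"
    by (simp add: field_simps power3_eq_cube)
  ultimately have "((\<lambda>x. (x - c)\<^sup>2) has_integral (w^3/12)) {c - w/2..c + w/2}" by metis
  then have "(\<integral>\<^sup>+x. ennreal (indicator {c - w/2..c + w/2} x * (x - c)\<^sup>2) \<partial>lborel) = ennreal (w^3/12)"
    by (intro nn_integral_has_integral_lebesgue) auto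
  moreover have "(\<integral>\<^sup>+x. indicator {c - w/2..c + w/2} x * ennreal ((x - c)\<^sup>2) \<partial>lborel)
     = (\<integral>\<^sup>+x. ennreal (indicator {c - w/2..c + w/2} x * (x - c)\<^sup>2) \<partial>lborel)"
    by (intro nn_integral_cong) (auto simp: indicator_def)
  ultimately show ?thesis by simp
qed

definition grid :: "real \<Rightarrow> real \<Rightarrow> nat \<Rightarrow> real set" where
  "grid p L k = (\<lambda>i. p + (2 * real i + 1) * L / (2 * real k)) ` {..<k}"

lemma grid_fin: "finite (grid p L k)" unfolding grid_def by auto
lemma grid_ne: "k \<ge> 1 \<Longrightarrow> grid p L k \<noteq> {}" unfolding grid_def by (cases k) auto
lemma grid_card: "card (grid p L k) \<le> k" unfolding grid_def
  by (metis card_image_le card_lessThan finite_lessThan)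
lemma grid_sub: "0 \<le> L \<Longrightarrow> grid p L k \<subseteq> {p..p+L}"
proof
  fix x assume L: "0 \<le> L" and "x \<in> grid p L k"
  then obtain i where i: "i < k" "x = p + (2 * real i + 1) * L / (2 * real k)" unfolding grid_def by auto
  have "(2 * real i + 1) \<le> 2 * real k" using i by auto
  then have "(2 * real i + 1) * L \<le> 2 * real k * L" using L by (intro mult_right_mono) auto
  then have "(2 * real i + 1) * L / (2 * real k) \<le> L" using i by (auto simp: field_simps)
  moreover have "0 \<le> (2 * real i + 1) * L / (2 * real k)" using L by auto
  ultimately show "x \<in> {p..p+L}" using i by auto
qed

lemma cover_cell:
  fixes x p w :: real and k :: nat
  assumes w: "0 < w" and k: "k \<ge> 1" and x: "p \<le> x" "x \<le> p + real k * w"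
  shows "\<exists>i<k. p + real i * w \<le> x \<and> x \<le> p + (real i + 1) * w"
proof (cases "\<lfloor>(x - p) / w\<rfloor> < int k")
  case True
  define i where "i = nat \<lfloor>(x - p) / w\<rfloor>"
  have f0: "0 \<le> \<lfloor>(x - p) / w\<rfloor>" using x w by auto
  have ri: "real i = of_int \<lfloor>(x - p) / w\<rfloor>" unfolding i_def using f0 by auto
  have "real i \<le> (x - p) / w" "(x - p) / w < real i + 1" unfolding ri by linarith+
  then have "real i * w \<le> x - p" "x - p < (real i + 1) * w" using w by (auto simp: field_simps)
  moreover have "i < k" using True f0 unfolding i_def by linarith
  ultimately show ?thesis by (intro exI[of _ i]) auto
next
  case False
  then have "int k \<le> \<lfloor>(x - p) / w\<rfloor>" by simp
  then have "real k \<le> (x - p) / w" by (metis le_floor_iff of_int_of_nat_eq)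
  then have "real k * w \<le> x - p" using w by (auto simp: field_simps)
  then have "x = p + real k * w" using x by auto
  then show ?thesis using k w by (intro exI[of _ "k - 1"]) (auto simp: of_nat_diff algebra_simps)
qed

lemma grid_ub:
  fixes p L :: real and k :: nat
  assumes L: "0 < L" and k: "k \<ge> 1"
  shows "(\<integral>\<^sup>+x. indicator {p..p+L} x * ennreal ((dd (grid p L k) x)\<^sup>2) \<partial>lborel) \<le> ennreal (L^3 / (12 * (real k)^2))"
proof -
  define w where "w = L / real k"
  have w: "0 < w" using L k unfolding w_def by auto
  define c where "c i = p + (2 * real i + 1) * L / (2 * real k)" for i :: nat
  have c: "c i = p + real i * w + w/2" for i unfolding c_def w_def using k by (auto simp: field_simps)
  have Lk: "p + L = p + real k * w" unfolding w_def using k by auto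
  have pt: "indicator {p..p+L} x * ennreal ((dd (grid p L k) x)\<^sup>2)
      \<le> (\<Sum>i<k. indicator {c i - w/2..c i + w/2} x * ennreal ((x - c i)\<^sup>2))" for x
  proof (cases "x \<in> {p..p+L}")
    case True
    then obtain i where i: "i < k" "p + real i * w \<le> x" "x \<le> p + (real i + 1) * w"
      using cover_cell[OF w k, of p x] Lk by auto
    have "c i \<in> grid p L k" unfolding grid_def c_def using i by auto
    then have "dd (grid p L k) x \<le> \<bar>x - c i\<bar>"
      unfolding dd_def by (intro Min_le) (auto simp: grid_fin)
    moreover have "0 \<le> dd (grid p L k) x" using dd_nonneg[OF grid_fin grid_ne[OF k]] by auto
    ultimately have "(dd (grid p L k) x)\<^sup>2 \<le> (x - c i)\<^sup>2"
      by (metis abs_le_square_iff abs_of_nonneg power2_abs)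
    then have "indicator {p..p+L} x * ennreal ((dd (grid p L k) x)\<^sup>2)
        \<le> indicator {c i - w/2..c i + w/2} x * ennreal ((x - c i)\<^sup>2)"
      using True i by (auto simp: indicator_def c algebra_simps)
    also have "\<dots> \<le> (\<Sum>i<k. indicator {c i - w/2..c i + w/2} x * ennreal ((x - c i)\<^sup>2))"
      using i(1) by (intro member_le_sum) auto
    finally show ?thesis .
  next
    case False then show ?thesis by auto
  qed
  have "(\<integral>\<^sup>+x. indicator {p..p+L} x * ennreal ((dd (grid p L k) x)\<^sup>2) \<partial>lborel)
      \<le> (\<integral>\<^sup>+x. (\<Sum>i<k. indicator {c i - w/2..c i + w/2} x * ennreal ((x - c i)\<^sup>2)) \<partial>lborel)"
    by (intro nn_integral_mono pt)
  also have "\<dots> = (\<Sum>i<k. (\<integral>\<^sup>+x. indicator {c i - w/2..c i + w/2} x * ennreal ((x - c i)\<^sup>2) \<partial>lborel))"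
    by (intro nn_integral_sum) auto
  also have "\<dots> = (\<Sum>i<k. ennreal (w^3/12))"
    using w by (intro sum.cong refl cell_integral) auto
  also have "\<dots> = ennreal (real k * (w^3/12))"
    using w by (simp add: ennreal_of_nat_eq_real_of_nat ennreal_mult'[symmetric])
  also have "real k * (w^3/12) = L^3 / (12 * (real k)^2)"
    unfolding w_def using k by (simp add: field_simps power2_eq_square power3_eq_cube)
  finally show ?thesis .
qed

definition NA :: "real set \<Rightarrow> ennreal" where
  "NA \<beta> = (\<integral>\<^sup>+x. indicator {0..1/2} x * ennreal ((dd \<beta> x)\<^sup>2) \<partial>lborel)"
definition NB :: "real set \<Rightarrow> ennreal" where
  "NB \<beta> = (\<integral>\<^sup>+x. indicator {3/4..1} x * ennreal ((dd \<beta> x)\<^sup>2) \<partial>lborel)"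

lemma N_finite:
  fixes \<beta> :: "real set"
  assumes fin: "finite \<beta>" "\<beta> \<noteq> {}"
  shows "(\<integral>\<^sup>+x. indicator {p..q} x * ennreal ((dd \<beta> x)\<^sup>2) \<partial>lborel) < \<infinity>"
proof -
  obtain a0 where a0: "a0 \<in> \<beta>" using fin by auto
  define C where "C = (\<bar>p\<bar> + \<bar>q\<bar> + \<bar>a0\<bar>)\<^sup>2"
  have pt: "indicator {p..q} x * ennreal ((dd \<beta> x)\<^sup>2) \<le> ennreal C * indicator {p..q} x" for x
  proof (cases "x \<in> {p..q}")
    case True
    have "dd \<beta> x \<le> \<bar>x - a0\<bar>" unfolding dd_def using fin a0 by (intro Min_le) auto
    also have "\<dots> \<le> \<bar>p\<bar> + \<bar>q\<bar> + \<bar>a0\<bar>" using True by auto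
    finally have "(dd \<beta> x)\<^sup>2 \<le> C" unfolding C_def using dd_nonneg[OF fin, of x]
      by (intro power_mono) auto
    then show ?thesis using True by (auto simp: indicator_def intro: ennreal_leI)
  qed auto
  have "(\<integral>\<^sup>+x. indicator {p..q} x * ennreal ((dd \<beta> x)\<^sup>2) \<partial>lborel) \<le> (\<integral>\<^sup>+x. ennreal C * indicator {p..q} x \<partial>lborel)"
    by (intro nn_integral_mono pt)
  also have "\<dots> = ennreal C * emeasure lborel {p..q}" by (subst nn_integral_cmult_indicator) auto
  also have "\<dots> < \<infinity>" by (auto simp: emeasure_lborel_Icc_eq ennreal_mult_less_top)
  finally show ?thesis .
qed

definition DA :: "real set \<Rightarrow> real" where "DA \<beta> = enn2real (NA \<beta>)"
definition DB :: "real set \<Rightarrow> real" where "DB \<beta> = enn2real (NB \<beta>)"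

lemma dist_eq:
  fixes \<beta> :: "real set"
  assumes fin: "finite \<beta>" "\<beta> \<noteq> {}"
  shows "distortion P \<beta> = 3/2 * DA \<beta> + DB \<beta>"
proof -
  note [measurable] = dd_meas[OF fin(1)]
  define f where "f x = ennreal (3/4 * unif_dens 0 (1/2) x + 1/4 * unif_dens (3/4) 1 x)" for x
  have fm[measurable]: "f \<in> borel_measurable borel" unfolding f_def unif_dens_def by measurable
  have qd: "(\<lambda>x. Min ((\<lambda>a. (x - a)\<^sup>2) ` \<beta>)) = (\<lambda>x. (dd \<beta> x)\<^sup>2)"
    using qd_eq[OF fin] by auto
  have sP: "sets P = sets borel" unfolding P_def by simp
  have m: "(\<lambda>x. (dd \<beta> x)\<^sup>2) \<in> borel_measurable P"
    by (subst measurable_cong_sets[OF sP refl]) measurable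
  have "distortion P \<beta> = enn2real (\<integral>\<^sup>+x. ennreal ((dd \<beta> x)\<^sup>2) \<partial>P)"
    unfolding distortion_def qd by (rule integral_eq_nn_integral[OF m]) auto
  also have "(\<integral>\<^sup>+x. ennreal ((dd \<beta> x)\<^sup>2) \<partial>P) = (\<integral>\<^sup>+x. f x * ennreal ((dd \<beta> x)\<^sup>2) \<partial>lborel)"
    unfolding P_def f_def[symmetric] by (subst nn_integral_density) auto
  also have "\<dots> = (\<integral>\<^sup>+x. ennreal (3/2) * (indicator {0..1/2} x * ennreal ((dd \<beta> x)\<^sup>2))
                      + indicator {3/4..1} x * ennreal ((dd \<beta> x)\<^sup>2) \<partial>lborel)"
  proof (intro nn_integral_cong)
    fix x :: real
    show "f x * ennreal ((dd \<beta> x)\<^sup>2) = ennreal (3/2) * (indicator {0..1/2} x * ennreal ((dd \<beta> x)\<^sup>2))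
                      + indicator {3/4..1} x * ennreal ((dd \<beta> x)\<^sup>2)"
      unfolding f_def unif_dens_def by (auto simp: indicator_def)
  qed
  also have "\<dots> = ennreal (3/2) * NA \<beta> + NB \<beta>"
    unfolding NA_def NB_def by (subst nn_integral_add) (auto simp: nn_integral_cmult)
  also have "enn2real \<dots> = 3/2 * DA \<beta> + DB \<beta>"
    using N_finite[OF fin, of 0 "1/2"] N_finite[OF fin, of "3/4" 1] unfolding DA_def DB_def NA_def NB_def
    by (subst enn2real_plus) (auto simp: enn2real_mult ennreal_mult_less_top)
  finally show ?thesis .
qed

lemma D_lb:
  assumes "ennreal r \<le> X" "X < \<infinity>"
  shows "r \<le> enn2real X"
proof (cases "0 \<le> r")
  case True
  have "enn2real (ennreal r) \<le> enn2real X" by (rule enn2real_mono[OF assms(1)]) (use assms(2) in simp)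
  then show ?thesis using True by simp
next
  case False
  then show ?thesis using enn2real_nonneg[of X] by linarith
qed

lemma D_ub:
  assumes "X \<le> ennreal r" "0 \<le> r"
  shows "enn2real X \<le> r"
  using enn2real_leI[OF assms(2,1)] .

lemma LB_gen:
  fixes \<beta> :: "real set"
  assumes fin: "finite \<beta>" "\<beta> \<noteq> {}" and pq: "p \<le> q"
    and e: "e = 2 * real (card (\<beta> \<inter> {p..q})) + (if \<exists>b\<in>\<beta>. b < p then 1 else 0) + (if \<exists>b\<in>\<beta>. q < b then 1 else 0)"
    and epos: "0 < e"
  shows "(q - p)^3 / (3*e^2) \<le> enn2real (\<integral>\<^sup>+x. indicator {p..q} x * ennreal ((dd \<beta> x)\<^sup>2) \<partial>lborel)"
proof (rule D_lb[OF LB_T1[OF fin pq epos] N_finite[OF fin]])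
  fix t :: real assume t: "0 \<le> t"
  have "(q - p) - (2 * real (card (\<beta> \<inter> {p..q})) * t
     + (if \<exists>b\<in>\<beta>. b < p then max 0 (t - 0) else 0) + (if \<exists>b\<in>\<beta>. q < b then max 0 (t - 0) else 0))
     \<le> measure lborel {x\<in>{p..q}. t < dd \<beta> x}"
    by (rule meas_lb[OF fin pq t]) auto
  moreover have "(2 * real (card (\<beta> \<inter> {p..q})) * t
     + (if \<exists>b\<in>\<beta>. b < p then max 0 (t - 0) else 0) + (if \<exists>b\<in>\<beta>. q < b then max 0 (t - 0) else 0)) = e * t"
    unfolding e using t by (auto simp: algebra_simps)
  ultimately show "q - p - e * t \<le> measure lborel {x \<in> {p..q}. t < dd \<beta> x}" by simp
qed

lemma LB_far:
  fixes \<beta> :: "real set"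
  assumes fin: "finite \<beta>" "\<beta> \<noteq> {}" and pq: "p \<le> q"
    and k: "k = card (\<beta> \<inter> {p..q})" "1 \<le> k"
    and dl: "(q - p) / (2 * real k) \<le> dl" and dh: "(q - p) / (2 * real k) \<le> dh"
    and lo: "\<And>b. b \<in> \<beta> \<Longrightarrow> b < p \<Longrightarrow> b \<le> p - dl"
    and hi: "\<And>b. b \<in> \<beta> \<Longrightarrow> q < b \<Longrightarrow> q + dh \<le> b"
  shows "(q - p)^3 / (3*(2 * real k)^2) \<le> enn2real (\<integral>\<^sup>+x. indicator {p..q} x * ennreal ((dd \<beta> x)\<^sup>2) \<partial>lborel)"
proof (rule D_lb[OF LB_T1[OF fin pq] N_finite[OF fin]])
  show "0 < 2 * real k" using k by auto
  fix t :: real assume t: "0 \<le> t"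
  have d0: "0 \<le> dl" "0 \<le> dh" using dl dh pq k by (auto intro: order_trans[rotated])
  have M: "(q - p) - (2 * real (card (\<beta> \<inter> {p..q})) * t
     + (if \<exists>b\<in>\<beta>. b < p then max 0 (t - dl) else 0) + (if \<exists>b\<in>\<beta>. q < b then max 0 (t - dh) else 0))
     \<le> measure lborel {x\<in>{p..q}. t < dd \<beta> x}"
    by (rule meas_lb[OF fin pq t d0 lo hi])
  show "q - p - 2 * real k * t \<le> measure lborel {x \<in> {p..q}. t < dd \<beta> x}"
  proof (cases "t \<le> dl \<and> t \<le> dh")
    case True
    then have "(if \<exists>b\<in>\<beta>. b < p then max 0 (t - dl) else 0) = 0" "(if \<exists>b\<in>\<beta>. q < b then max 0 (t - dh) else 0) = 0"
      by auto
    then show ?thesis using M k by simp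
  next
    case False
    then have "(q - p) / (2 * real k) < t" using dl dh by auto
    then have "q - p < 2 * real k * t" using k by (auto simp: field_simps)
    then show ?thesis by (smt (verit) measure_nonneg)
  qed
qed

lemma LB_T2:
  fixes \<beta> :: "real set"
  assumes fin: "finite \<beta>" "\<beta> \<noteq> {}"
    and k: "card (\<beta> \<inter> {0..1/2}) = 1"
    and lo: "\<And>b. b \<in> \<beta> \<Longrightarrow> 0 \<le> b"
    and hi: "\<And>b. b \<in> \<beta> \<Longrightarrow> 1/2 < b \<Longrightarrow> 5/8 \<le> b"
  shows "29/3456 \<le> DA \<beta>"
  unfolding DA_def NA_def
proof (rule D_lb[OF order_trans[OF _ layer_lb[OF fin]] N_finite[OF fin]])
  show "ennreal (29/3456) \<le> (\<integral>\<^sup>+t. indicator {0..} t * ennreal (2*t*min (1/2 - 2*t) (5/8 - 3*t)) \<partial>lborel)"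
    using T2_integral by simp
  fix t :: real assume t: "0 \<le> t"
  have M: "(1/2 - 0) - (2 * real (card (\<beta> \<inter> {0..1/2})) * t
     + (if \<exists>b\<in>\<beta>. b < 0 then max 0 (t - 0) else 0) + (if \<exists>b\<in>\<beta>. 1/2 < b then max 0 (t - 1/8) else 0))
     \<le> measure lborel {x\<in>{0..1/2}. t < dd \<beta> x}"
    by (rule meas_lb[OF fin _ t]) (use lo hi in force)+
  have nlo: "\<not> (\<exists>b\<in>\<beta>. b < 0)" using lo by force
  have h1: "(if \<exists>b\<in>\<beta>. 1/2 < b then max 0 (t - 1/8) else 0) \<le> max 0 (t - 1/8)" by auto
  have h2: "min (1/2 - 2*t) (5/8 - 3*t) \<le> 1/2 - 2*t - max 0 (t - 1/8)" by (auto simp: min_def max_def)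
  have "min (1/2 - 2*t) (5/8 - 3*t) \<le> (1/2 - 0) - (2 * real (card (\<beta> \<inter> {0..1/2})) * t
     + (if \<exists>b\<in>\<beta>. b < 0 then max 0 (t - 0) else 0) + (if \<exists>b\<in>\<beta>. 1/2 < b then max 0 (t - 1/8) else 0))"
    using h1 h2 nlo k by simp
  with M show "min (1/2 - 2*t) (5/8 - 3*t) \<le> measure lborel {x\<in>{0..1/2}. t < dd \<beta> x}" by linarith
qed

lemma LB_direct:
  fixes \<beta> :: "real set"
  assumes fin: "finite \<beta>" "\<beta> \<noteq> {}" and le: "\<And>b. b \<in> \<beta> \<Longrightarrow> b \<le> 5/8"
  shows "13/768 \<le> DB \<beta>"
  unfolding DB_def NB_def
proof (rule D_lb[OF _ N_finite[OF fin]])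
  have "((\<lambda>x. (x - 5/8)\<^sup>2) has_integral ((1 - 5/8)^3/3 - (3/4 - 5/8)^3/3)) {3/4..(1::real)}"
    by (rule fundamental_theorem_of_calculus) (auto intro!: derivative_eq_intros
        simp: has_real_derivative_iff_has_vector_derivative[symmetric] field_simps power2_eq_square power3_eq_cube)
  then have "((\<lambda>x. (x - 5/8)\<^sup>2) has_integral (13/768)) {3/4..(1::real)}"
    by (simp add: power3_eq_cube)
  then have "(\<integral>\<^sup>+x. ennreal (indicator {3/4..1} x * (x - 5/8)\<^sup>2) \<partial>lborel) = ennreal (13/768)"
    by (intro nn_integral_has_integral_lebesgue) auto
  then have "ennreal (13/768) = (\<integral>\<^sup>+x. indicator {3/4..1} x * ennreal ((x - 5/8)\<^sup>2) \<partial>lborel)"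
  proof -
    have "(\<integral>\<^sup>+x. indicator {3/4..1} x * ennreal ((x - 5/8)\<^sup>2) \<partial>lborel) = (\<integral>\<^sup>+x. ennreal (indicator {3/4..1} x * (x - 5/8)\<^sup>2) \<partial>lborel)"
      by (intro nn_integral_cong) (auto simp: indicator_def)
    then show ?thesis using \<open>_ = ennreal (13/768)\<close> by simp
  qed
  also have "\<dots> \<le> (\<integral>\<^sup>+x. indicator {3/4..1} x * ennreal ((dd \<beta> x)\<^sup>2) \<partial>lborel)"
  proof (intro nn_integral_mono)
    fix x :: real
    show "indicator {3/4..1} x * ennreal ((x - 5/8)\<^sup>2) \<le> indicator {3/4..1} x * ennreal ((dd \<beta> x)\<^sup>2)"
    proof (cases "x \<in> {3/4..1}")
      case True
      have "dd \<beta> x \<in> (\<lambda>a. \<bar>x - a\<bar>) ` \<beta>" unfolding dd_def using fin by (intro Min_in) auto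
      then obtain a where a: "a \<in> \<beta>" "dd \<beta> x = \<bar>x - a\<bar>" by auto
      then have "x - 5/8 \<le> dd \<beta> x" using le[OF a(1)] True by auto
      moreover have "0 \<le> x - 5/8" using True by auto
      ultimately have "(x - 5/8)\<^sup>2 \<le> (dd \<beta> x)\<^sup>2" by (intro power_mono) auto
      then show ?thesis using True by (auto simp: indicator_def)
    qed auto
  qed
  finally show "ennreal (13/768) \<le> (\<integral>\<^sup>+x. indicator {3/4..1} x * ennreal ((dd \<beta> x)\<^sup>2) \<partial>lborel)" .
qed

lemma dd_mono:
  assumes "finite \<beta>" "\<beta>1 \<noteq> {}" "\<beta>1 \<subseteq> \<beta>"
  shows "dd \<beta> x \<le> dd \<beta>1 x"
  unfolding dd_def using assms by (intro Min_antimono) (auto intro: finite_subset)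

definition GG :: "nat \<Rightarrow> nat \<Rightarrow> real set" where
  "GG k1 k2 = grid 0 (1/2) k1 \<union> grid (3/4) (1/4) k2"

lemma GG_props:
  assumes k: "1 \<le> k1" "1 \<le> k2"
  shows "finite (GG k1 k2)" "GG k1 k2 \<noteq> {}" "card (GG k1 k2) \<le> k1 + k2"
    "distortion P (GG k1 k2) \<le> 3/2 * ((1/2)^3 / (3 * (2 * real k1)^2)) + (1/4)^3 / (3 * (2 * real k2)^2)"
proof -
  show fin: "finite (GG k1 k2)" unfolding GG_def by (simp add: grid_fin)
  show ne: "GG k1 k2 \<noteq> {}" unfolding GG_def using grid_ne[OF k(1)] by simp
  show "card (GG k1 k2) \<le> k1 + k2" unfolding GG_def
    by (rule order_trans[OF card_Un_le add_mono[OF grid_card grid_card]])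
  have ga: "(\<integral>\<^sup>+x. indicator {0..0+1/2} x * ennreal ((dd (grid 0 (1/2) k1) x)\<^sup>2) \<partial>lborel) \<le> ennreal ((1/2)^3 / (12 * (real k1)^2))"
    by (rule grid_ub) (use k in auto)
  have gb: "(\<integral>\<^sup>+x. indicator {3/4..3/4+1/4} x * ennreal ((dd (grid (3/4) (1/4) k2) x)\<^sup>2) \<partial>lborel) \<le> ennreal ((1/4)^3 / (12 * (real k2)^2))"
    by (rule grid_ub) (use k in auto)
  have s1: "grid 0 (1/2) k1 \<subseteq> GG k1 k2" "grid (3/4) (1/4) k2 \<subseteq> GG k1 k2" unfolding GG_def by blast+
  have sq: "(dd (GG k1 k2) x)\<^sup>2 \<le> (dd S x)\<^sup>2" if "S \<subseteq> GG k1 k2" "S \<noteq> {}" for S x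
  proof -
    have "dd (GG k1 k2) x \<le> dd S x" by (rule dd_mono[OF fin that(2,1)])
    moreover have "0 \<le> dd (GG k1 k2) x" using dd_nonneg[OF fin ne] .
    ultimately show ?thesis by (simp add: power_mono)
  qed
  have ua: "NA (GG k1 k2) \<le> ennreal ((1/2)^3 / (12 * (real k1)^2))"
    unfolding NA_def
  proof (rule order_trans[OF nn_integral_mono ga])
    fix x :: real
    show "indicator {0..1/2} x * ennreal ((dd (GG k1 k2) x)\<^sup>2) \<le> indicator {0..0+1/2} x * ennreal ((dd (grid 0 (1/2) k1) x)\<^sup>2)"
      using sq[OF s1(1) grid_ne[OF k(1)], of x] by (auto simp: indicator_def intro: ennreal_leI)
  qed
  have ub: "NB (GG k1 k2) \<le> ennreal ((1/4)^3 / (12 * (real k2)^2))"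
    unfolding NB_def
  proof (rule order_trans[OF nn_integral_mono gb])
    fix x :: real
    show "indicator {3/4..1} x * ennreal ((dd (GG k1 k2) x)\<^sup>2) \<le> indicator {3/4..3/4+1/4} x * ennreal ((dd (grid (3/4) (1/4) k2) x)\<^sup>2)"
      using sq[OF s1(2) grid_ne[OF k(2)], of x] by (auto simp: indicator_def intro: ennreal_leI)
  qed
  have "DA (GG k1 k2) \<le> (1/2)^3 / (12 * (real k1)^2)" unfolding DA_def by (rule D_ub[OF ua]) simp
  moreover have "DB (GG k1 k2) \<le> (1/4)^3 / (12 * (real k2)^2)" unfolding DB_def by (rule D_ub[OF ub]) simp
  moreover have "(1/2)^3 / (12 * (real k1)^2) = (1/2::real)^3 / (3 * (2 * real k1)^2)" by (simp add: power2_eq_square)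
  moreover have "(1/4)^3 / (12 * (real k2)^2) = (1/4::real)^3 / (3 * (2 * real k2)^2)" by (simp add: power2_eq_square)
  ultimately show "distortion P (GG k1 k2) \<le> 3/2 * ((1/2)^3 / (3 * (2 * real k1)^2)) + (1/4)^3 / (3 * (2 * real k2)^2)"
    unfolding dist_eq[OF fin ne] by linarith
qed

lemma inv_sq_le:
  fixes x y c :: real
  assumes "0 < x" "x \<le> y" "0 \<le> c"
  shows "c / (3 * y^2) \<le> c / (3 * x^2)"
  using assms by (intro divide_left_mono mult_left_mono power_mono) auto

lemma inv_sq_less:
  fixes x y c :: real
  assumes "0 < x" "x < y" "0 < c"
  shows "c / (3 * y^2) < c / (3 * x^2)"
  using assms by (intro divide_strict_left_mono mult_strict_left_mono power_strict_mono) auto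

lemma improve:
  fixes \<alpha> :: "real set" and n :: nat
  assumes fin: "finite \<alpha>" and ne: "\<alpha> \<noteq> {}" and card: "card \<alpha> \<le> n" and n: "2 \<le> n"
    and gap: "a \<in> \<alpha>" "1/2 < a" "a < 3/4"
  shows "\<exists>\<beta>. finite \<beta> \<and> \<beta> \<noteq> {} \<and> card \<beta> \<le> n \<and> distortion P \<beta> < distortion P \<alpha>"
proof -
  define fA where "fA = (\<lambda>x::real. (1/2::real)^3 / (3 * x^2))"
  define fB where "fB = (\<lambda>x::real. (1/4::real)^3 / (3 * x^2))"
  have fA_le: "fA y \<le> fA x" if "0 < x" "x \<le> y" for x y unfolding fA_def by (rule inv_sq_le) (use that in auto)
  have fB_le: "fB y \<le> fB x" if "0 < x" "x \<le> y" for x y unfolding fB_def by (rule inv_sq_le) (use that in auto)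
  have fA_less: "fA y < fA x" if "0 < x" "x < y" for x y unfolding fA_def by (rule inv_sq_less) (use that in auto)
  have fB_less: "fB y < fB x" if "0 < x" "x < y" for x y unfolding fB_def by (rule inv_sq_less) (use that in auto)
  have fB_nonneg: "0 \<le> fB x" for x unfolding fB_def by auto
  have DA0: "0 \<le> DA \<alpha>" "0 \<le> DB \<alpha>" unfolding DA_def DB_def by auto
  have Dal: "distortion P \<alpha> = 3/2 * DA \<alpha> + DB \<alpha>" by (rule dist_eq[OF fin ne])
  have suff: "\<exists>\<beta>. finite \<beta> \<and> \<beta> \<noteq> {} \<and> card \<beta> \<le> n \<and> distortion P \<beta> < distortion P \<alpha>"
    if "1 \<le> k1" "1 \<le> k2" "k1 + k2 \<le> n" "3/2 * fA (2 * real k1) + fB (2 * real k2) < 3/2 * DA \<alpha> + DB \<alpha>" for k1 k2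
  proof (intro exI conjI)
    note G = GG_props[OF that(1,2)]
    show "finite (GG k1 k2)" "GG k1 k2 \<noteq> {}" by (rule G(1), rule G(2))
    show "card (GG k1 k2) \<le> n" using G(3) that(3) by linarith
    show "distortion P (GG k1 k2) < distortion P \<alpha>"
      using G(4) that(4) Dal unfolding fA_def fB_def by linarith
  qed
  define SA where "SA = \<alpha> \<inter> {0..1/2}"
  define SB where "SB = \<alpha> \<inter> {3/4..1}"
  define SG where "SG = \<alpha> \<inter> {1/2<..<3/4}"
  define SL where "SL = \<alpha> \<inter> {..<0}"
  define SH where "SH = \<alpha> \<inter> {1<..}"
  define kA where "kA = card SA"
  define kB where "kB = card SB"
  define lo where "lo = (\<exists>b\<in>\<alpha>. b < 0)"
  define hi where "hi = (\<exists>b\<in>\<alpha>. 1 < b)"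
  have finS: "finite SA" "finite SB" "finite SG" "finite SL" "finite SH"
    using fin unfolding SA_def SB_def SG_def SL_def SH_def by auto
  have aeq: "\<alpha> = SA \<union> SB \<union> SG \<union> SL \<union> SH"
    unfolding SA_def SB_def SG_def SL_def SH_def by auto
  have dec: "card \<alpha> = kA + kB + card SG + card SL + card SH"
  proof -
    have "card (SA \<union> SB) = card SA + card SB"
      by (rule card_Un_disjoint) (use finS in \<open>auto simp: SA_def SB_def\<close>)
    moreover have "card (SA \<union> SB \<union> SG) = card (SA \<union> SB) + card SG"
      by (rule card_Un_disjoint) (use finS in \<open>auto simp: SA_def SB_def SG_def\<close>)
    moreover have "card (SA \<union> SB \<union> SG \<union> SL) = card (SA \<union> SB \<union> SG) + card SL"
      by (rule card_Un_disjoint) (use finS in \<open>auto simp: SA_def SB_def SG_def SL_def\<close>)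
    moreover have "card (SA \<union> SB \<union> SG \<union> SL \<union> SH) = card (SA \<union> SB \<union> SG \<union> SL) + card SH"
      by (rule card_Un_disjoint) (use finS in \<open>auto simp: SA_def SB_def SG_def SL_def SH_def\<close>)
    ultimately show ?thesis using aeq unfolding kA_def kB_def by simp
  qed
  have SGne: "1 \<le> card SG" using gap finS(3) unfolding SG_def
    by (metis (no_types, lifting) IntI card_0_eq empty_iff greaterThanLessThan_iff less_one not_le)
  have loc: "lo \<Longrightarrow> 1 \<le> card SL" using finS(4) unfolding lo_def SL_def
    by (metis (no_types, lifting) IntI card_0_eq empty_iff lessThan_iff less_one not_le)
  have hic: "hi \<Longrightarrow> 1 \<le> card SH" using finS(5) unfolding hi_def SH_def
    by (metis (no_types, lifting) IntI card_0_eq empty_iff greaterThan_iff less_one not_le)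
  have gA: "\<exists>b\<in>\<alpha>. 1/2 < b" and gB: "\<exists>b\<in>\<alpha>. b < 3/4" using gap by auto
  define eA where "eA = 2 * real kA + (if lo then 1 else 0) + 1"
  define eB where "eB = 2 * real kB + 1 + (if hi then 1 else 0)"
  have LA: "fA eA \<le> DA \<alpha>"
  proof -
    have "(1/2 - 0)^3 / (3*eA^2) \<le> enn2real (\<integral>\<^sup>+x. indicator {0..1/2} x * ennreal ((dd \<alpha> x)\<^sup>2) \<partial>lborel)"
      by (rule LB_gen[OF fin ne]) (use gA in \<open>auto simp: eA_def kA_def SA_def lo_def\<close>)
    then show ?thesis unfolding fA_def DA_def NA_def by simp
  qed
  have LB: "fB eB \<le> DB \<alpha>"
  proof -
    have "(1 - 3/4)^3 / (3*eB^2) \<le> enn2real (\<integral>\<^sup>+x. indicator {3/4..1} x * ennreal ((dd \<alpha> x)\<^sup>2) \<partial>lborel)"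
      by (rule LB_gen[OF fin ne]) (use gB in \<open>auto simp: eB_def kB_def SB_def hi_def\<close>)
    then show ?thesis unfolding fB_def DB_def NB_def by (simp add: power_divide)
  qed
  show ?thesis
  proof (cases "lo \<or> hi \<or> 2 \<le> card SG")
    case True
    define k1 where "k1 = kA + 1 + (if lo \<and> hi then 1 else 0)"
    define k2 where "k2 = kB + 1"
    show ?thesis
    proof (rule suff[of k1 k2])
      show "1 \<le> k1" "1 \<le> k2" unfolding k1_def k2_def by auto
      show "k1 + k2 \<le> n" using True dec card loc hic SGne unfolding k1_def k2_def by auto
      have e1: "0 < eA" "eA \<le> 2 * real k1" "0 < eB" "eB \<le> 2 * real k2"
        unfolding eA_def eB_def k1_def k2_def by auto
      have "3/2 * fA (2 * real k1) + fB (2 * real k2) < 3/2 * fA eA + fB eB"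
      proof (cases lo)
        case False
        then have "eA < 2 * real k1" unfolding eA_def k1_def by auto
        then show ?thesis using fA_less[OF e1(1)] fB_le[OF e1(3,4)] by fastforce
      next
        case lo: True
        show ?thesis
        proof (cases hi)
          case False
          then have "eB < 2 * real k2" unfolding eB_def k2_def by auto
          then show ?thesis using fA_le[OF e1(1,2)] fB_less[OF e1(3)] by fastforce
        next
          case True
          then have "eA < 2 * real k1" using lo unfolding eA_def k1_def by auto
          then show ?thesis using fA_less[OF e1(1)] fB_le[OF e1(3,4)] by fastforce
        qed
      qed
      then show "3/2 * fA (2 * real k1) + fB (2 * real k2) < 3/2 * DA \<alpha> + DB \<alpha>"
        using LA LB by linarith
    qed
  next
    case False
    then have nlo: "\<not> lo" and nhi: "\<not> hi" and g1: "card SG = 1" using SGne by auto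
    have SLe: "card SL = 0" using nlo finS(4) unfolding lo_def SL_def by auto
    have SHe: "card SH = 0" using nhi finS(5) unfolding hi_def SH_def by auto
    have cardA: "kA + kB + 1 \<le> n" using dec card g1 SLe SHe by auto
    have SGa: "SG = {a}"
    proof -
      have "a \<in> SG" using gap unfolding SG_def by auto
      then show ?thesis using g1 by (metis card_1_singletonE singletonD)
    qed
    have where_b: "b \<in> {0..1/2} \<or> b = a \<or> b \<in> {3/4..1}" if "b \<in> \<alpha>" for b
    proof -
      have "b \<notin> SL" "b \<notin> SH" using nlo nhi that unfolding lo_def hi_def SL_def SH_def by auto
      then have "b \<in> SA \<or> b \<in> SB \<or> b \<in> SG" using aeq that by blast
      then show ?thesis using SGa unfolding SA_def SB_def by auto
    qed
    have eA': "eA = 2 * real kA + 1" and eB': "eB = 2 * real kB + 1"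
      using nlo nhi unfolding eA_def eB_def by auto
    show ?thesis
    proof (cases "5/8 \<le> a")
      case True
      have hiA: "1/2 + 1/8 \<le> b" if "b \<in> \<alpha>" "1/2 < b" for b
        using where_b[OF that(1)] that(2) True by auto
      have loA: "b \<le> 0 - 1" if "b \<in> \<alpha>" "b < 0" for b
        using nlo that unfolding lo_def by auto
      show ?thesis
      proof (cases "2 \<le> kA")
        case kA2: True
        have DAf: "fA (2 * real kA) \<le> DA \<alpha>"
        proof -
          have "(1/2 - 0)^3 / (3*(2 * real kA)^2) \<le> enn2real (\<integral>\<^sup>+x. indicator {0..1/2} x * ennreal ((dd \<alpha> x)\<^sup>2) \<partial>lborel)"
          proof (rule LB_far[OF fin ne _ _ _ _ _ loA hiA])
            show "kA = card (\<alpha> \<inter> {0..1/2})" unfolding kA_def SA_def ..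
            show "(1/2 - 0) / (2 * real kA) \<le> 1/8" using kA2 by (auto simp: field_simps)
          qed (use kA2 in auto)
          then show ?thesis unfolding fA_def DA_def NA_def by simp
        qed
        show ?thesis
        proof (rule suff[of kA "kB + 1"])
          show "1 \<le> kA" "1 \<le> kB + 1" "kA + (kB + 1) \<le> n" using kA2 cardA by auto
          have "fB (2 * real (kB + 1)) < fB eB" unfolding eB' by (rule fB_less) auto
          then show "3/2 * fA (2 * real kA) + fB (2 * real (kB + 1)) < 3/2 * DA \<alpha> + DB \<alpha>"
            using DAf LB by linarith
        qed
      next
        case False
        then have "kA = 0 \<or> kA = 1" by auto
        then show ?thesis
        proof
          assume kA0: "kA = 0"
          show ?thesis
          proof (rule suff[of 1 "max kB 1"])
            show "1 \<le> (1::nat)" "1 \<le> max kB 1" "1 + max kB 1 \<le> n" using cardA n by auto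
            have "fB (2 * real (max kB 1)) \<le> fB 2" by (rule fB_le) auto
            moreover have "fA eA = 1/24" unfolding eA' kA0 fA_def by (simp add: power_divide)
            moreover have "fA 2 = 1/96" "fB 2 = 1/768" unfolding fA_def fB_def by (simp_all add: power_divide)
            ultimately show "3/2 * fA (2 * real (1::nat)) + fB (2 * real (max kB 1)) < 3/2 * DA \<alpha> + DB \<alpha>"
              using LA DA0 by simp
          qed
        next
          assume kA1: "kA = 1"
          show ?thesis
          proof (cases "kB = 0")
            case kB0: True
            have T: "29/3456 \<le> DA \<alpha>"
            proof (rule LB_T2[OF fin ne])
              show "card (\<alpha> \<inter> {0..1/2}) = 1" using kA1 unfolding kA_def SA_def .
              show "0 \<le> b" if "b \<in> \<alpha>" for b using nlo that unfolding lo_def by force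
              show "5/8 \<le> b" if "b \<in> \<alpha>" "1/2 < b" for b using hiA[OF that] by simp
            qed
            show ?thesis
            proof (rule suff[of 1 1])
              show "1 \<le> (1::nat)" "1 + 1 \<le> n" using n by auto
              have "fB eB = 1/192" unfolding eB' kB0 fB_def by (simp add: power_divide)
              moreover have "fA 2 = 1/96" "fB 2 = 1/768" unfolding fA_def fB_def by (simp_all add: power_divide)
              ultimately show "3/2 * fA (2 * real (1::nat)) + fB (2 * real (1::nat)) < 3/2 * DA \<alpha> + DB \<alpha>"
                using LB T by simp
            qed simp
          next
            case False
            show ?thesis
            proof (rule suff[of 2 kB])
              show "1 \<le> (2::nat)" "1 \<le> kB" "2 + kB \<le> n" using False cardA kA1 by auto
              have "fB (2 * real kB) \<le> fB 2" by (rule fB_le) (use False in auto)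
              moreover have "fA eA = 1/216" unfolding eA' kA1 fA_def by (simp add: power_divide)
              moreover have "fA 4 = 1/384" "fB 2 = 1/768" unfolding fA_def fB_def by (simp_all add: power_divide)
              moreover have "0 \<le> fB eB" by (rule fB_nonneg)
              ultimately show "3/2 * fA (2 * real (2::nat)) + fB (2 * real kB) < 3/2 * DA \<alpha> + DB \<alpha>"
                using LA LB by simp
            qed
          qed
        qed
      qed
    next
      case False
      have loB: "b \<le> 3/4 - 1/8" if "b \<in> \<alpha>" "b < 3/4" for b
        using where_b[OF that(1)] that(2) False by auto
      have hiB: "1 + 1 \<le> b" if "b \<in> \<alpha>" "1 < b" for b
        using nhi that unfolding hi_def by auto
      show ?thesis
      proof (cases "1 \<le> kB")
        case kB1: True
        have DBf: "fB (2 * real kB) \<le> DB \<alpha>"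
        proof -
          have "(1 - 3/4)^3 / (3*(2 * real kB)^2) \<le> enn2real (\<integral>\<^sup>+x. indicator {3/4..1} x * ennreal ((dd \<alpha> x)\<^sup>2) \<partial>lborel)"
          proof (rule LB_far[OF fin ne _ _ _ _ _ loB hiB])
            show "kB = card (\<alpha> \<inter> {3/4..1})" unfolding kB_def SB_def ..
            show "(1 - 3/4) / (2 * real kB) \<le> 1/8" using kB1 by (auto simp: field_simps)
          qed (use kB1 in auto)
          then show ?thesis unfolding fB_def DB_def NB_def by (simp add: power_divide)
        qed
        show ?thesis
        proof (rule suff[of "kA + 1" kB])
          show "1 \<le> kA + 1" "1 \<le> kB" "kA + 1 + kB \<le> n" using kB1 cardA by auto
          have "fA (2 * real (kA + 1)) < fA eA" unfolding eA' by (rule fA_less) auto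
          then show "3/2 * fA (2 * real (kA + 1)) + fB (2 * real kB) < 3/2 * DA \<alpha> + DB \<alpha>"
            using DBf LA by linarith
        qed
      next
        case False
        then have kB0: "kB = 0" by auto
        have D13: "13/768 \<le> DB \<alpha>"
        proof (rule LB_direct[OF fin ne])
          fix b assume "b \<in> \<alpha>"
          then show "b \<le> 5/8" using where_b[of b] \<open>\<not> 5/8 \<le> a\<close> kB0 finS(2)
            unfolding kB_def SB_def by auto
        qed
        show ?thesis
        proof (rule suff[of "max kA 1" 1])
          show "1 \<le> max kA 1" "1 \<le> (1::nat)" "max kA 1 + 1 \<le> n" using cardA n by auto
          have "fA (2 * real (max kA 1)) \<le> fA 2" by (rule fA_le) auto
          moreover have "0 < fA eA" unfolding eA' fA_def by auto
          moreover have "fA 2 = 1/96" "fB 2 = 1/768" unfolding fA_def fB_def by (simp_all add: power_divide)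
          ultimately show "3/2 * fA (2 * real (max kA 1)) + fB (2 * real (1::nat)) < 3/2 * DA \<alpha> + DB \<alpha>"
            using LA D13 by simp
        qed
      qed
    qed
  qed
qed

theorem proposition3p6:
  fixes n :: nat and \<alpha> :: "real set"
  assumes "n \<ge> 2" and "optimal_n_means P n \<alpha>"
  shows "\<alpha> \<inter> {1/2<..<3/4} = {}"
proof (rule ccontr)
  assume "\<alpha> \<inter> {1/2<..<3/4} \<noteq> {}"
  then obtain a where a: "a \<in> \<alpha>" "1/2 < a" "a < 3/4" by auto
  have fin: "finite \<alpha>" and ne: "\<alpha> \<noteq> {}" and c: "card \<alpha> \<le> n"
    and eq: "distortion P \<alpha> = nth_quant_error P n"
    using assms(2) unfolding optimal_n_means_def by auto
  obtain \<beta> where \<beta>: "finite \<beta>" "\<beta> \<noteq> {}" "card \<beta> \<le> n" "distortion P \<beta> < distortion P \<alpha>"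
    using improve[OF fin ne c assms(1) a] by blast
  have "nth_quant_error P n \<le> distortion P \<beta>"
    unfolding nth_quant_error_def
  proof (rule cInf_lower)
    show "distortion P \<beta> \<in> {distortion P \<beta> |\<beta>. finite \<beta> \<and> \<beta> \<noteq> {} \<and> card \<beta> \<le> n}" using \<beta> by blast
    show "bdd_below {distortion P \<beta> |\<beta>. finite \<beta> \<and> \<beta> \<noteq> {} \<and> card \<beta> \<le> n}"
    proof (rule bdd_belowI[of _ 0])
      fix x assume "x \<in> {distortion P \<beta> |\<beta>. finite \<beta> \<and> \<beta> \<noteq> {} \<and> card \<beta> \<le> n}"
      then obtain \<gamma> where "finite \<gamma>" "\<gamma> \<noteq> {}" "x = distortion P \<gamma>" by blast
      then show "0 \<le> x" using dist_eq[of \<gamma>] unfolding DA_def DB_def by auto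
    qed
  qed
  then show False using \<beta>(4) eq by linarith
qed

end
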